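(* Let $\lambda>0$ and $\alpha\in(0,1)$. Let $J$ and $N$ be the regular and singular solutions of $\varphi''+\frac{2}{r}\varphi'+\lambda\varphi=0$ on $(0,\infty)$, normalized so that $J(r)=r^{-1}\cos(\sqrt\lambda r-\zeta)+O(r^{-2})$ and $N(r)=r^{-1}\sin(\sqrt\lambda r-\zeta)+O(r^{-2})$ as $r\to+\infty$, where $\zeta\in\mathbb{R}$ is a constant depending on $\lambda$. Let $\rho$ be a smooth cutoff with $\rho(r)=1$ for $r>2$ and $\rho(r)=0$ for $r<1$. Let $$\eta(r)=\rho(r)r^{-2}\big[k_1\sin^2(\sqrt\lambda r-\zeta)+k_2\cos^2(\sqrt\lambda r-\zeta)+k_3\sin(\sqrt\lambda r-\zeta)\cos(\sqrt\lambda r-\zeta)\big]+\bar\eta(r),$$ where $k_1,k_2,k_3\in\mathbb{R}$ and $\|\bar\eta(r)(1+r)^3\|_{C^{0,\alpha}}+\sum_i|k_i|<C$. Then the equation $$h''+\frac{2}{r}h'+\lambda h=\eta$$ has a solution $h\in C^{0,\alpha}[0,+\infty)$ of the form $$h(r)=c_1r^{-1}\sin(\sqrt\lambda r-\zeta)+\bar h(r),\quad r>1,$$ where $|c_1|\le C'$ and $|\bar h(r)|\le C'(1+r)^{-2}$, with $C'$ depending only on $C$ and $\lambda$. *)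

theory Defs
  imports "HOL-Analysis.Analysis" "HOL-Library.Landau_Symbols"
begin

text \<open>Hoelder norm C^{0,alpha} on a set S of reals, valued in the extended reals
  (infinite iff the function is unbounded or not alpha-Hoelder on S):
  sup norm plus Hoelder seminorm.\<close>
definition holder_norm :: "real \<Rightarrow> real set \<Rightarrow> (real \<Rightarrow> real) \<Rightarrow> ereal" where
  "holder_norm \<alpha> S f =
     (SUP x\<in>S. ereal \<bar>f x\<bar>) +
     (SUP p\<in>{(x, y). x \<in> S \<and> y \<in> S \<and> x \<noteq> y}.
        ereal (\<bar>f (fst p) - f (snd p)\<bar> / \<bar>fst p - snd p\<bar> powr \<alpha>))"

definition solves_radial :: "real \<Rightarrow> (real \<Rightarrow> real) \<Rightarrow> (real \<Rightarrow> real) \<Rightarrow> bool" where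
  "solves_radial lam g \<phi> \<longleftrightarrow>
     (\<forall>r>0. (\<phi> has_real_derivative deriv \<phi> r) (at r) \<and>
            (deriv \<phi> has_real_derivative (g r - (2 / r) * deriv \<phi> r - lam * \<phi> r)) (at r))"

end

theory Submission
  imports Defs
begin

lemma zeta_cos_zero:
  fixes lam \<zeta> :: real and J :: "real \<Rightarrow> real"
  assumes lam_pos: "lam > 0"
    and J_sol: "solves_radial lam (\<lambda>_. 0) J"
    and J_regular: "\<exists>L. (J \<longlongrightarrow> L) (at_right 0)"
    and J_asym: "(\<lambda>r. J r - cos (sqrt lam * r - \<zeta>) / r) \<in> O[at_top](\<lambda>r. 1 / r ^ 2)"
  shows "cos \<zeta> = 0"
proof -
  define k where "k = sqrt lam"
  have kpos: "k > 0" using lam_pos by (simp add: k_def)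
  have kk: "k * k = lam" using lam_pos by (simp add: k_def)
  define J' where "J' = deriv J"
  have hJ1: "\<And>r. r > 0 \<Longrightarrow> (J has_real_derivative J' r) (at r)"
    using J_sol by (simp add: solves_radial_def J'_def)
  have hJ2: "\<And>r. r > 0 \<Longrightarrow> (J' has_real_derivative (0 - 2 / r * J' r - lam * J r)) (at r)"
    using J_sol by (simp add: solves_radial_def J'_def)
  define w where "w r = r * J r" for r
  define w' where "w' r = J r + r * J' r" for r
  have dw: "(w has_real_derivative w' r) (at r)" if "r > 0" for r
    unfolding w_def w'_def
    by (rule derivative_eq_intros hJ1 that refl | simp)+
  have dw': "(w' has_real_derivative (- lam * w r)) (at r)" if "r > 0" for r
  proof -
    have "(w' has_real_derivative (J' r + (1 * J' r + (0 - 2 / r * J' r - lam * J r) * r))) (at r)"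
      unfolding w'_def
      by (rule DERIV_add[OF hJ1[OF that] DERIV_mult[OF DERIV_ident hJ2[OF that]]])
    moreover have "J' r + (1 * J' r + (0 - 2 / r * J' r - lam * J r) * r) = - lam * w r"
      using that by (simp add: w_def field_simps)
    ultimately show ?thesis by simp
  qed
  define E1 where "E1 r = w' r * cos (k * r) + k * w r * sin (k * r)" for r
  define E2 where "E2 r = w' r * sin (k * r) - k * w r * cos (k * r)" for r
  have dE1: "(E1 has_real_derivative 0) (at r within {0<..})" if "r \<in> {0<..}" for r
  proof -
    have r: "r > 0" using that by simp
    have "(E1 has_real_derivative 0) (at r)"
      unfolding E1_def
      by (rule derivative_eq_intros dw[OF r] dw'[OF r] refl | simp add: kk[symmetric] algebra_simps)+
    thus ?thesis by (simp add: has_field_derivative_at_within)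
  qed
  have dE2: "(E2 has_real_derivative 0) (at r within {0<..})" if "r \<in> {0<..}" for r
  proof -
    have r: "r > 0" using that by simp
    have "(E2 has_real_derivative 0) (at r)"
      unfolding E2_def
      by (rule derivative_eq_intros dw[OF r] dw'[OF r] refl | simp add: kk[symmetric] algebra_simps)+
    thus ?thesis by (simp add: has_field_derivative_at_within)
  qed
  obtain a where a: "\<forall>r\<in>{0<..}. E1 r = a"
    using has_field_derivative_zero_constant[OF convex_real_interval(3) dE1] by blast
  obtain b where b: "\<forall>r\<in>{0<..}. E2 r = b"
    using has_field_derivative_zero_constant[OF convex_real_interval(3) dE2] by blast
  have wform: "k * w r = a * sin (k * r) - b * cos (k * r)" if "r > 0" for r
  proof -
    have "E1 r * sin (k * r) - E2 r * cos (k * r) = k * w r * (sin (k * r) * sin (k * r) + cos (k * r) * cos (k * r))"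
      unfolding E1_def E2_def
      by (simp only: algebra_simps)
    hence "k * w r = E1 r * sin (k * r) - E2 r * cos (k * r)" by (metis mult_1_right sin_cos_squared_add3 add.commute)
    thus ?thesis using a b that by simp
  qed
  obtain L where L: "(J \<longlongrightarrow> L) (at_right 0)" using J_regular by blast
  have "((\<lambda>r. k * w r) \<longlongrightarrow> k * (0 * L)) (at_right 0)"
    unfolding w_def
    by (intro tendsto_intros L)
  hence lim1: "((\<lambda>r. k * w r) \<longlongrightarrow> 0) (at_right 0)" by simp
  have l3: "((\<lambda>r. a * sin (k * r) - b * cos (k * r)) \<longlongrightarrow> - b) (at_right 0)"
  proof -
    have "((\<lambda>r. a * sin (k * r) - b * cos (k * r)) \<longlongrightarrow> a * sin (k * 0) - b * cos (k * 0)) (at_right 0)"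
      by (intro tendsto_intros)
    thus ?thesis by simp
  qed
  have ev3: "\<forall>\<^sub>F r in at_right 0. a * sin (k * r) - b * cos (k * r) = k * w r"
    using wform eventually_at_right_less[of 0] by (auto elim!: eventually_mono)
  have lim2: "((\<lambda>r. k * w r) \<longlongrightarrow> - b) (at_right 0)"
    by (rule Lim_transform_eventually[OF l3 ev3])
  have "- b = (0::real)"
    using tendsto_unique[OF trivial_limit_at_right_real lim2 lim1] .
  hence b0: "b = 0" by simp
  have Jform: "J r = a * sin (k * r) / (k * r)" if "r > 0" for r
    using wform[OF that] b0 kpos that by (simp add: w_def field_simps)
  obtain c where c: "c > 0"
    and ev: "\<forall>\<^sub>F r in at_top. norm (J r - cos (sqrt lam * r - \<zeta>) / r) \<le> c * norm (1 / r ^ 2)"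
    using J_asym by (elim landau_o.bigE)
  obtain N where N: "\<And>r. r \<ge> N \<Longrightarrow> \<bar>J r - cos (k * r - \<zeta>) / r\<bar> \<le> c * \<bar>1 / r ^ 2\<bar>"
    using ev unfolding eventually_at_top_linorder k_def by auto
  show "cos \<zeta> = 0"
  proof (rule ccontr)
    assume nz: "cos \<zeta> \<noteq> 0"
    define M where "M = max (max N 1) (c / \<bar>cos \<zeta>\<bar>)"
    obtain n :: nat where n: "M * k / (2 * pi) < real n"
      using reals_Archimedean2 by blast
    define x where "x = 2 * pi * real n / k"
    have "M * k < 2 * pi * real n" using n pi_gt_zero by (simp add: pos_divide_less_eq mult.commute)
    hence xbig: "M < x" using kpos by (simp add: x_def pos_less_divide_eq)
    hence xbig: "max (max N 1) (c / \<bar>cos \<zeta>\<bar>) < x" by (simp add: M_def)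
    have x1: "x \<ge> 1" and xN: "x \<ge> N" and xc: "c / \<bar>cos \<zeta>\<bar> < x" using xbig by auto
    have kx: "k * x = real (2 * n) * pi" using kpos by (simp add: x_def)
    have "J x = 0" using Jform[of x] x1 kx by (simp add: sin_npi)
    moreover have "cos (k * x - \<zeta>) = cos \<zeta>"
      unfolding kx cos_diff by (simp add: sin_npi cos_npi)
    ultimately have "\<bar>cos \<zeta> / x\<bar> \<le> c * \<bar>1 / x ^ 2\<bar>" using N[OF xN] by simp
    hence "\<bar>cos \<zeta>\<bar> / x \<le> c / (x * x)" using x1 by (simp add: power2_eq_square)
    hence "\<bar>cos \<zeta>\<bar> * x \<le> c" using x1 by (simp add: field_simps)
    moreover have "c < \<bar>cos \<zeta>\<bar> * x" using xc nz by (simp add: field_simps)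
    ultimately show False by simp
  qed
qed

lemma holder_extract:
  fixes f :: "real \<Rightarrow> real"
  assumes H: "holder_norm \<alpha> {0..} f + ereal s < ereal C"
  shows "\<And>x. x \<ge> 0 \<Longrightarrow> \<bar>f x\<bar> + s < C"
    and "\<exists>R. \<forall>x\<ge>0. \<forall>y\<ge>0. \<bar>f x - f y\<bar> \<le> R * \<bar>x - y\<bar> powr \<alpha>"
proof -
  define A where "A = (SUP x\<in>{0::real..}. ereal \<bar>f x\<bar>)"
  define B where "B = (SUP p\<in>{(x, y). x \<in> {0::real..} \<and> y \<in> {0..} \<and> x \<noteq> y}.
        ereal (\<bar>f (fst p) - f (snd p)\<bar> / \<bar>fst p - snd p\<bar> powr \<alpha>))"
  have HAB: "A + B + ereal s < ereal C" using H by (simp add: holder_norm_def A_def B_def)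
  have B0: "B \<ge> 0"
    unfolding B_def
    by (rule SUP_upper2[of "(0,1)"]) auto
  have A0: "A \<ge> 0"
    unfolding A_def by (rule SUP_upper2[of 0]) auto
  show "\<bar>f x\<bar> + s < C" if "x \<ge> 0" for x
  proof -
    have "ereal \<bar>f x\<bar> \<le> A" unfolding A_def by (rule SUP_upper) (use that in auto)
    hence "ereal \<bar>f x\<bar> + 0 + ereal s \<le> A + B + ereal s"
      by (intro add_mono B0 order.refl)
    hence "ereal (\<bar>f x\<bar> + s) \<le> A + B + ereal s" by simp
    hence "ereal (\<bar>f x\<bar> + s) < ereal C" using HAB by (rule le_less_trans)
    thus ?thesis by simp
  qed
  have "A + B + ereal s \<noteq> \<infinity>" using HAB by auto
  hence "B \<noteq> \<infinity>" using A0 by auto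
  then obtain R where R: "B = ereal R" using B0 by (cases B) auto
  have "\<bar>f x - f y\<bar> \<le> R * \<bar>x - y\<bar> powr \<alpha>" if "x \<ge> 0" "y \<ge> 0" for x y
  proof (cases "x = y")
    case True
    have "R \<ge> 0" using B0 R by simp
    thus ?thesis using True by simp
  next
    case False
    have "ereal (\<bar>f x - f y\<bar> / \<bar>x - y\<bar> powr \<alpha>) \<le> B"
      unfolding B_def by (rule SUP_upper2[of "(x,y)"]) (use that False in auto)
    hence "\<bar>f x - f y\<bar> / \<bar>x - y\<bar> powr \<alpha> \<le> R" using R by simp
    moreover have "\<bar>x - y\<bar> powr \<alpha> > 0" using False by simp
    ultimately show ?thesis by (simp add: divide_le_eq)
  qed
  thus "\<exists>R. \<forall>x\<ge>0. \<forall>y\<ge>0. \<bar>f x - f y\<bar> \<le> R * \<bar>x - y\<bar> powr \<alpha>" by blast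
qed

lemma holder_continuous:
  fixes f :: "real \<Rightarrow> real"
  assumes a: "\<alpha> > 0" and R: "\<forall>x\<ge>0. \<forall>y\<ge>0. \<bar>f x - f y\<bar> \<le> R * \<bar>x - y\<bar> powr \<alpha>"
  shows "continuous_on {0..} f"
  unfolding continuous_on_iff
proof (intro ballI allI impI)
  fix x e :: real assume x: "x \<in> {0..}" and e: "e > 0"
  define R' where "R' = max R 0 + 1"
  have R'pos: "R' > 0" by (simp add: R'_def)
  define d where "d = (e / R') powr (1 / \<alpha>)"
  have d: "d > 0" using e R'pos by (simp add: d_def)
  show "\<exists>d>0. \<forall>x'\<in>{0..}. dist x' x < d \<longrightarrow> dist (f x') (f x) < e"
  proof (intro exI[of _ d] conjI d ballI impI)
    fix y assume y: "y \<in> {0..}" and dy: "dist y x < d"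
    have "\<bar>y - x\<bar> powr \<alpha> < d powr \<alpha>"
      using dy a by (intro powr_less_mono2) (auto simp: dist_real_def)
    also have "d powr \<alpha> = e / R'"
      using e R'pos a by (simp add: d_def powr_powr)
    finally have lt: "\<bar>y - x\<bar> powr \<alpha> < e / R'" .
    have "\<bar>f y - f x\<bar> \<le> R * \<bar>y - x\<bar> powr \<alpha>" using R x y by auto
    also have "\<dots> \<le> R' * \<bar>y - x\<bar> powr \<alpha>"
      by (intro mult_right_mono) (auto simp: R'_def)
    also have "\<dots> < R' * (e / R')"
      using lt R'pos by (intro mult_strict_left_mono) auto
    also have "\<dots> = e" using R'pos by simp
    finally show "dist (f y) (f x) < e" by (simp add: dist_real_def)
  qed
qed

lemma holder_finite:
  fixes f :: "real \<Rightarrow> real"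
  assumes a: "0 < \<alpha>" "\<alpha> \<le> 1" and B: "\<And>x. x \<in> S \<Longrightarrow> \<bar>f x\<bar> \<le> Bd" and "Bd \<ge> 0" "L \<ge> 0"
    and L: "\<And>x y. x \<in> S \<Longrightarrow> y \<in> S \<Longrightarrow> \<bar>f x - f y\<bar> \<le> L * \<bar>x - y\<bar>"
  shows "holder_norm \<alpha> S f < \<infinity>"
proof -
  have A: "(SUP x\<in>S. ereal \<bar>f x\<bar>) \<le> ereal Bd"
    by (rule SUP_least) (use B in auto)
  have Bq: "(SUP p\<in>{(x, y). x \<in> S \<and> y \<in> S \<and> x \<noteq> y}.
        ereal (\<bar>f (fst p) - f (snd p)\<bar> / \<bar>fst p - snd p\<bar> powr \<alpha>)) \<le> ereal (L + 2 * Bd)"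
  proof (rule SUP_least, clarify)
    fix x y assume xy: "x \<in> S" "y \<in> S" "x \<noteq> y"
    define t where "t = \<bar>x - y\<bar>"
    have t: "t > 0" using xy by (simp add: t_def)
    have tp: "t powr \<alpha> > 0" using t by simp
    have "\<bar>f x - f y\<bar> \<le> (L + 2 * Bd) * t powr \<alpha>"
    proof (cases "t \<le> 1")
      case True
      have "t = t powr 1" using t by simp
      also have "\<dots> \<le> t powr \<alpha>" using True t a by (intro powr_mono') auto
      finally have "t \<le> t powr \<alpha>" .
      have "\<bar>f x - f y\<bar> \<le> L * t" using L xy by (simp add: t_def)
      also have "\<dots> \<le> L * t powr \<alpha>" using \<open>t \<le> t powr \<alpha>\<close> \<open>L \<ge> 0\<close> by (intro mult_left_mono) auto
      also have "\<dots> \<le> (L + 2 * Bd) * t powr \<alpha>" using \<open>Bd \<ge> 0\<close> tp by (intro mult_right_mono) auto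
      finally show ?thesis .
    next
      case False
      have "1 \<le> t powr \<alpha>" using False a by (simp add: ge_one_powr_ge_zero)
      have "\<bar>f x - f y\<bar> \<le> \<bar>f x\<bar> + \<bar>f y\<bar>" by simp
      also have "\<dots> \<le> 2 * Bd" using B[OF xy(1)] B[OF xy(2)] by simp
      also have "\<dots> \<le> (L + 2 * Bd) * 1" using \<open>L \<ge> 0\<close> by simp
      also have "\<dots> \<le> (L + 2 * Bd) * t powr \<alpha>"
        using \<open>1 \<le> t powr \<alpha>\<close> \<open>L \<ge> 0\<close> \<open>Bd \<ge> 0\<close> by (intro mult_left_mono) auto
      finally show ?thesis .
    qed
    hence "\<bar>f x - f y\<bar> / t powr \<alpha> \<le> L + 2 * Bd" using tp by (simp add: divide_le_eq)
    thus "ereal (\<bar>f (fst (x, y)) - f (snd (x, y))\<bar> / \<bar>fst (x, y) - snd (x, y)\<bar> powr \<alpha>) \<le> ereal (L + 2 * Bd)"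
      by (simp add: t_def)
  qed
  have "holder_norm \<alpha> S f \<le> ereal Bd + ereal (L + 2 * Bd)"
    unfolding holder_norm_def by (intro add_mono A Bq)
  moreover have "ereal Bd + ereal (L + 2 * Bd) < \<infinity>" by simp
  ultimately show ?thesis by (rule le_less_trans)
qed

lemma radial_from_u:
  fixes v v' g h \<eta> :: "real \<Rightarrow> real"
  assumes dv: "\<And>r. r > 0 \<Longrightarrow> (v has_real_derivative v' r) (at r)"
    and dv': "\<And>r. r > 0 \<Longrightarrow> (v' has_real_derivative (g r - lam * v r)) (at r)"
    and hv: "\<And>r. r > 0 \<Longrightarrow> h r = v r / r"
    and g: "\<And>r. r > 0 \<Longrightarrow> g r = r * \<eta> r"
  shows "solves_radial lam \<eta> h"
  unfolding solves_radial_def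
proof (intro allI impI conjI)
  define hd where "hd x = (v' x * x - v x * 1) / (x * x)" for x
  have dh: "(h has_real_derivative hd r) (at r)" if r: "r > 0" for r
  proof -
    have "((\<lambda>x. v x / x) has_real_derivative hd r) (at r)"
      unfolding hd_def using DERIV_divide[OF dv[OF r] DERIV_ident] r by simp
    thus ?thesis
      by (rule has_field_derivative_transform_within_open[where S="{0<..}"]) (use r hv in auto)
  qed
  have dd: "deriv h x = hd x" if "x > 0" for x using dh[OF that] by (rule DERIV_imp_deriv)
  fix r :: real assume r: "r > 0"
  show "(h has_real_derivative deriv h r) (at r)" using dh[OF r] dd[OF r] by simp
  have rr: "r * r \<noteq> 0" using r by simp
  have "(hd has_real_derivative (\<eta> r - 2 / r * deriv h r - lam * h r)) (at r)"
    unfolding hd_def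
    by (rule DERIV_cong[OF DERIV_divide[OF DERIV_diff[OF DERIV_mult[OF dv'[OF r] DERIV_ident] DERIV_mult[OF dv[OF r] DERIV_const]]
         DERIV_mult[OF DERIV_ident DERIV_ident] rr]]) (use r in \<open>simp add: dd hv g hd_def field_simps\<close>)
  thus "(deriv h has_real_derivative (\<eta> r - 2 / r * deriv h r - lam * h r)) (at r)"
    by (rule has_field_derivative_transform_within_open[where S="{0<..}"]) (use r dd in auto)
qed

lemma lipschitz_from_deriv:
  fixes h h' :: "real \<Rightarrow> real"
  assumes c: "continuous_on {0..} h"
    and d: "\<And>r. r > 0 \<Longrightarrow> (h has_real_derivative h' r) (at r)"
    and b: "\<And>r. r > 0 \<Longrightarrow> \<bar>h' r\<bar> \<le> L"
  shows "\<And>x y. x \<ge> 0 \<Longrightarrow> y \<ge> 0 \<Longrightarrow> \<bar>h x - h y\<bar> \<le> L * \<bar>x - y\<bar>"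
proof -
  have main: "\<bar>h y - h x\<bar> \<le> L * (y - x)" if xy: "0 \<le> x" "x < y" for x y
  proof -
    have cont: "continuous_on {x..y} h" by (rule continuous_on_subset[OF c]) (use xy in auto)
    have diff: "h differentiable (at z)" if "x < z" "z < y" for z
    proof -
      have "(h has_real_derivative h' z) (at z)" using d that xy by simp
      thus ?thesis unfolding real_differentiable_def by blast
    qed
    obtain l z where z: "x < z" "z < y" "(h has_real_derivative l) (at z)"
      and eq: "h y - h x = (y - x) * l"
      using MVT[OF xy(2) cont diff] by blast
    have "l = h' z" using DERIV_unique[OF z(3) d] z xy by simp
    hence "\<bar>l\<bar> \<le> L" using b z xy by simp
    have "\<bar>h y - h x\<bar> = (y - x) * \<bar>l\<bar>" using eq xy by (simp add: abs_mult)
    also have "\<dots> \<le> (y - x) * L" using \<open>\<bar>l\<bar> \<le> L\<close> xy by (intro mult_left_mono) auto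
    finally show ?thesis by (simp add: algebra_simps)
  qed
  fix x y :: real assume "x \<ge> 0" "y \<ge> 0"
  thus "\<bar>h x - h y\<bar> \<le> L * \<bar>x - y\<bar>"
  proof (cases x y rule: linorder_cases)
    case less
    thus ?thesis using main[of x y] \<open>x \<ge> 0\<close> by (simp add: abs_minus_commute[of "h x"] abs_minus_commute[of x])
  next
    case equal thus ?thesis by simp
  next
    case greater
    thus ?thesis using main[of y x] \<open>y \<ge> 0\<close> by simp
  qed
qed

lemma arctan_tail:
  assumes "r > 0" shows "pi / 2 - arctan r \<le> 1 / r"
proof -
  have "pi / 2 - arctan r = arctan (inverse r)" using Complex_Transcendental.arctan_inverse[OF assms] by simp
  also have "\<dots> \<le> inverse r" using assms by (intro arctan_le_self) simp
  finally show ?thesis by (simp add: inverse_eq_divide)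
qed

lemma tail_limit:
  fixes f :: "real \<Rightarrow> real"
  assumes cf: "continuous_on {0..} f"
    and bf: "\<And>s. s \<ge> 0 \<Longrightarrow> \<bar>f s\<bar> \<le> K / (1 + s\<^sup>2)"
  shows "\<exists>Pinf. \<forall>r\<ge>0. \<bar>integral {0..r} f - Pinf\<bar> \<le> K * (pi / 2 - arctan r)"
proof -
  have K: "K \<ge> 0" using bf[of 0] by simp
  define I where "I t = integral {0..t} f" for t
  have intg: "f integrable_on {a..b}" if "0 \<le> a" for a b
    by (rule integrable_continuous_interval, rule continuous_on_subset[OF cf]) (use that in auto)
  have arc: "((\<lambda>s. K / (1 + s\<^sup>2)) has_integral (K * arctan t - K * arctan r)) {r..t}"
    if "r \<le> t" for r t
  proof (rule fundamental_theorem_of_calculus[OF that])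
    fix x assume "x \<in> {r..t}"
    have "((\<lambda>s. K * arctan s) has_real_derivative K * inverse (1 + x\<^sup>2)) (at x)"
      by (intro DERIV_cmult DERIV_arctan)
    thus "((\<lambda>s. K * arctan s) has_vector_derivative K / (1 + x\<^sup>2)) (at x within {r..t})"
      by (simp add: has_real_derivative_iff_has_vector_derivative[symmetric] divide_inverse has_field_derivative_at_within)
  qed
  have step: "\<bar>I t - I r\<bar> \<le> K * (arctan t - arctan r)" if "0 \<le> r" "r \<le> t" for r t
  proof -
    have "I r + integral {r..t} f = I t"
      unfolding I_def by (rule Henstock_Kurzweil_Integration.integral_combine) (use that intg[of 0 t] in auto)
    hence "I t - I r = integral {r..t} f" by simp
    also have "\<bar>\<dots>\<bar> \<le> integral {r..t} (\<lambda>s. K / (1 + s\<^sup>2))"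
    proof -
      have "norm (f x) \<le> K / (1 + x\<^sup>2)" if "x \<in> {r..t}" for x
        using bf[of x] that \<open>0 \<le> r\<close> by simp
      hence "norm (integral {r..t} f) \<le> integral {r..t} (\<lambda>s. K / (1 + s\<^sup>2))"
        by (intro integral_norm_bound_integral[OF intg[OF that(1)] has_integral_integrable[OF arc[OF that(2)]]])
      thus ?thesis by simp
    qed
    also have "\<dots> = K * (arctan t - arctan r)"
      using arc[OF that(2)] by (simp add: integral_unique right_diff_distrib)
    finally show ?thesis .
  qed
  have step2: "\<bar>I t - I r\<bar> \<le> K * (pi / 2 - arctan r)" if "0 \<le> r" "r \<le> t" for r t
  proof -
    have "arctan t < pi / 2" by (rule arctan_ubound)
    hence "K * (arctan t - arctan r) \<le> K * (pi / 2 - arctan r)" using K by (intro mult_left_mono) auto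
    thus ?thesis using step[OF that] by simp
  qed
  define a where "a n = I (real n)" for n
  have "Cauchy a"
  proof (rule metric_CauchyI)
    fix e :: real assume e: "e > 0"
    obtain M :: nat where M: "2 * (K + 1) / e < real M" using reals_Archimedean2 by blast
    have "0 < 2 * (K + 1) / e" using K e by simp
    hence Mpos: "real M > 0" using M by linarith
    have bnd: "K * (pi / 2 - arctan (real M)) < e / 2"
    proof -
      have "K * (pi / 2 - arctan (real M)) \<le> K * (1 / real M)"
        using arctan_tail[OF Mpos] K by (intro mult_left_mono) auto
      also have "\<dots> = K / real M" by simp
      also have "\<dots> < e / 2"
      proof -
        have "2 * (K + 1) < real M * e" using M e by (simp add: divide_less_eq mult.commute)
        hence "K * 2 < e * real M" by (simp add: algebra_simps)
        thus ?thesis using Mpos e by (simp add: divide_less_eq less_divide_eq)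
      qed
      finally show ?thesis .
    qed
    show "\<exists>M. \<forall>m\<ge>M. \<forall>n\<ge>M. dist (a m) (a n) < e"
    proof (intro exI[of _ M] allI impI)
      fix m n assume mn: "m \<ge> M" "n \<ge> M"
      have "\<bar>a m - a (M)\<bar> \<le> K * (pi / 2 - arctan (real M))" unfolding a_def using mn by (intro step2) auto
      moreover have "\<bar>a n - a (M)\<bar> \<le> K * (pi / 2 - arctan (real M))" unfolding a_def using mn by (intro step2) auto
      ultimately have "\<bar>a m - a n\<bar> < e" using bnd by linarith
      thus "dist (a m) (a n) < e" by (simp add: dist_real_def)
    qed
  qed
  then obtain P where P: "a \<longlonglongrightarrow> P" by (auto simp: Cauchy_convergent_iff convergent_def)
  have "\<bar>I r - P\<bar> \<le> K * (pi / 2 - arctan r)" if r: "r \<ge> 0" for r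
  proof (rule tendsto_le[OF trivial_limit_sequentially tendsto_const])
    show "((\<lambda>n. \<bar>I r - a n\<bar>) \<longlongrightarrow> \<bar>I r - P\<bar>) sequentially"
      by (intro tendsto_intros P)
    obtain N :: nat where N: "r < real N" using reals_Archimedean2 by blast
    show "\<forall>\<^sub>F n in sequentially. \<bar>I r - a n\<bar> \<le> K * (pi / 2 - arctan r)"
      unfolding eventually_sequentially
    proof (intro exI[of _ N] allI impI)
      fix n assume "N \<le> n"
      hence "real N \<le> real n" by simp
      hence "r \<le> real n" using N by linarith
      thus "\<bar>I r - a n\<bar> \<le> K * (pi / 2 - arctan r)"
        using step2[OF r, of "real n"] unfolding a_def by (simp add: abs_minus_commute[of "I r"])
    qed
  qed
  thus ?thesis unfolding I_def by blast
qed

lemma lipschitz2: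
  fixes h h' :: "real \<Rightarrow> real"
  assumes d: "\<And>r. r > 0 \<Longrightarrow> (h has_real_derivative h' r) (at r)"
    and b: "\<And>r. r > 0 \<Longrightarrow> \<bar>h' r\<bar> \<le> L"
    and z: "\<And>r. r > 0 \<Longrightarrow> \<bar>h r - h 0\<bar> \<le> L * r"
  shows "\<And>x y. x \<ge> 0 \<Longrightarrow> y \<ge> 0 \<Longrightarrow> \<bar>h x - h y\<bar> \<le> L * \<bar>x - y\<bar>"
proof -
  have main: "\<bar>h y - h x\<bar> \<le> L * (y - x)" if xy: "0 \<le> x" "x < y" for x y
  proof (cases "x = 0")
    case True
    thus ?thesis using z[of y] xy by simp
  next
    case False
    hence x0: "x > 0" using xy by simp
    have cont: "continuous_on {x..y} h"
      using x0 by (intro continuous_at_imp_continuous_on ballI DERIV_isCont[OF d]) auto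
    have diff: "h differentiable (at z)" if "x < z" "z < y" for z
    proof -
      have "(h has_real_derivative h' z) (at z)" using d that x0 by simp
      thus ?thesis unfolding real_differentiable_def by blast
    qed
    obtain l z where zz: "x < z" "z < y" "(h has_real_derivative l) (at z)"
      and eq: "h y - h x = (y - x) * l"
      using MVT[OF xy(2) cont diff] by blast
    have "l = h' z" using DERIV_unique[OF zz(3) d] zz x0 by simp
    hence "\<bar>l\<bar> \<le> L" using b zz x0 by simp
    have "\<bar>h y - h x\<bar> = (y - x) * \<bar>l\<bar>" using eq xy by (simp add: abs_mult)
    also have "\<dots> \<le> (y - x) * L" using \<open>\<bar>l\<bar> \<le> L\<close> xy by (intro mult_left_mono) auto
    finally show ?thesis by (simp add: algebra_simps)
  qed
  fix x y :: real assume "x \<ge> 0" "y \<ge> 0"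
  thus "\<bar>h x - h y\<bar> \<le> L * \<bar>x - y\<bar>"
  proof (cases x y rule: linorder_cases)
    case less
    thus ?thesis using main[of x y] \<open>x \<ge> 0\<close> by (simp add: abs_minus_commute[of "h x"] abs_minus_commute[of x])
  next
    case equal thus ?thesis by simp
  next
    case greater
    thus ?thesis using main[of y x] \<open>y \<ge> 0\<close> by simp
  qed
qed

lemma qbounds:
  fixes s :: real
  assumes "s \<ge> 0"
  shows "0 < inverse (1 + s\<^sup>2)" "inverse (1 + s\<^sup>2) \<le> 1"
    "s * inverse (1 + s\<^sup>2) \<le> 1" "s\<^sup>2 * inverse (1 + s\<^sup>2) \<le> 1"
    "0 \<le> s * inverse (1 + s\<^sup>2)" "0 \<le> s\<^sup>2 * inverse (1 + s\<^sup>2)"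
proof -
  have p: "1 + s\<^sup>2 > 0" by (smt (verit) zero_le_power2)
  show "0 < inverse (1 + s\<^sup>2)" using p by simp
  show "inverse (1 + s\<^sup>2) \<le> 1" using p by (simp add: inverse_le_1_iff)
  have "s \<le> 1 + s\<^sup>2"
  proof -
    have "0 \<le> (s - 1)\<^sup>2" by simp
    thus ?thesis using assms by (simp add: power2_eq_square algebra_simps)
  qed
  thus "s * inverse (1 + s\<^sup>2) \<le> 1" using p by (simp add: field_simps)
  show "s\<^sup>2 * inverse (1 + s\<^sup>2) \<le> 1" using p by (simp add: field_simps)
  show "0 \<le> s * inverse (1 + s\<^sup>2)" "0 \<le> s\<^sup>2 * inverse (1 + s\<^sup>2)" using p assms by auto
qed

lemma prod_unit_bound:
  fixes a b q :: real
  assumes "0 \<le> a" "a \<le> 1" "0 \<le> b" "b \<le> 1" "0 \<le> q"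
  shows "0 \<le> a * q" "a * q \<le> q" "0 \<le> a * b * q" "a * b * q \<le> q"
    "0 \<le> a * b\<^sup>2 * q" "a * b\<^sup>2 * q \<le> q" "0 \<le> a\<^sup>2 * q" "a\<^sup>2 * q \<le> q"
proof -
  have ab: "0 \<le> a * b" "a * b \<le> 1" using assms by (auto simp: mult_le_one)
  have b2: "0 \<le> b\<^sup>2" "b\<^sup>2 \<le> 1" using assms by (auto simp: power_le_one)
  have a2: "0 \<le> a\<^sup>2" "a\<^sup>2 \<le> 1" using assms by (auto simp: power_le_one)
  have ab2: "0 \<le> a * b\<^sup>2" "a * b\<^sup>2 \<le> 1" using assms b2 by (auto simp: mult_le_one)
  show "0 \<le> a * q" "0 \<le> a * b * q" "0 \<le> a * b\<^sup>2 * q" "0 \<le> a\<^sup>2 * q"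
    using assms ab ab2 a2 by auto
  show "a * q \<le> q" using mult_right_mono[OF assms(2) assms(5)] by simp
  show "a * b * q \<le> q" using mult_right_mono[OF ab(2) assms(5)] by simp
  show "a * b\<^sup>2 * q \<le> q" using mult_right_mono[OF ab2(2) assms(5)] by simp
  show "a\<^sup>2 * q \<le> q" using mult_right_mono[OF a2(2) assms(5)] by simp
qed

lemma lin_trig_bound:
  fixes a b c x y :: real
  assumes "\<bar>x\<bar> \<le> 1" "\<bar>y\<bar> \<le> 1"
  shows "\<bar>a + b * x + c * y\<bar> \<le> \<bar>a\<bar> + \<bar>b\<bar> + \<bar>c\<bar>"
proof -
  have "\<bar>b * x\<bar> \<le> \<bar>b\<bar>" using assms mult_left_mono[of "\<bar>x\<bar>" 1 "\<bar>b\<bar>"] by (simp add: abs_mult)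
  moreover have "\<bar>c * y\<bar> \<le> \<bar>c\<bar>" using assms mult_left_mono[of "\<bar>y\<bar>" 1 "\<bar>c\<bar>"] by (simp add: abs_mult)
  ultimately show ?thesis by linarith
qed

lemma abs_mult_le1: "\<bar>x\<bar> \<le> 1 \<Longrightarrow> \<bar>a * x\<bar> \<le> \<bar>a::real\<bar>"
  using mult_left_mono[of "\<bar>x\<bar>" 1 "\<bar>a\<bar>"] by (simp add: abs_mult)

lemma abs_mult_le1': "\<bar>x\<bar> \<le> 1 \<Longrightarrow> \<bar>x * a\<bar> \<le> \<bar>a::real\<bar>"
  using mult_right_mono[of "\<bar>x\<bar>" 1 "\<bar>a\<bar>"] by (simp add: abs_mult)

lemma T_bound:
  fixes k1 k2 k3 t :: real
  shows "\<bar>k1 * (sin t)^2 + k2 * (cos t)^2 + k3 * sin t * cos t\<bar> \<le> \<bar>k1\<bar> + \<bar>k2\<bar> + \<bar>k3\<bar>"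
proof -
  have "\<bar>(sin t)^2\<bar> \<le> 1" "\<bar>(cos t)^2\<bar> \<le> 1" by (simp_all add: abs_square_le_1)
  hence a: "\<bar>k1 * (sin t)^2\<bar> \<le> \<bar>k1\<bar>" "\<bar>k2 * (cos t)^2\<bar> \<le> \<bar>k2\<bar>" by (simp_all add: abs_mult_le1)
  have "\<bar>sin t * cos t\<bar> \<le> 1"
    using mult_mono[OF abs_sin_le_one[of t] abs_cos_le_one[of t]] by (simp add: abs_mult)
  hence b: "\<bar>k3 * (sin t * cos t)\<bar> \<le> \<bar>k3\<bar>" by (rule abs_mult_le1)
  show ?thesis using a b by (simp add: mult.assoc) linarith
qed

lemma eta_bar_bound:
  fixes s C e :: real
  assumes "s \<ge> 0" "\<bar>e\<bar> \<le> C / (1 + s) ^ 3"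
  shows "\<bar>s * e\<bar> \<le> C * inverse (1 + s\<^sup>2)"
proof -
  have p: "(1 + s) ^ 3 > 0" "1 + s\<^sup>2 > 0" using assms by (auto simp: add_pos_nonneg)
  have "s * (1 + s\<^sup>2) \<le> (1 + s) ^ 3"
    using assms by (simp add: power2_eq_square power3_eq_cube algebra_simps)
  hence r: "s / (1 + s) ^ 3 \<le> inverse (1 + s\<^sup>2)"
    using p by (simp add: field_simps)
  have C0: "C \<ge> 0" using assms(2) p by (smt (verit) abs_ge_zero divide_nonneg_pos divide_neg_pos)
  have "\<bar>s * e\<bar> = s * \<bar>e\<bar>" using assms by (simp add: abs_mult)
  also have "\<dots> \<le> s * (C / (1 + s) ^ 3)" using assms by (intro mult_left_mono) auto
  also have "\<dots> = C * (s / (1 + s) ^ 3)" by simp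
  also have "\<dots> \<le> C * inverse (1 + s\<^sup>2)" using r C0 by (intro mult_left_mono) auto
  finally show ?thesis .
qed

lemma rho_phi_bound:
  fixes s Mr :: real and \<rho> :: "real \<Rightarrow> real"
  assumes s: "s \<ge> 0" and \<rho>1: "\<forall>r>2. \<rho> r = 1" and \<rho>0: "\<forall>r<1. \<rho> r = 0"
    and Mr: "\<forall>r. 1 \<le> r \<and> r \<le> 2 \<longrightarrow> \<bar>\<rho> r\<bar> \<le> Mr" "Mr \<ge> 0"
  shows "\<bar>s * (\<rho> s * inverse (s ^ 2)) - s ^ 3 * (inverse (1 + s\<^sup>2))^2\<bar> \<le> 5 * (Mr + 1) * inverse (1 + s\<^sup>2)"
proof (cases "s > 2")
  case True
  have p: "1 + s\<^sup>2 > 0" "s > 0" using True by (auto simp: add_pos_nonneg)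
  define D where "D = (1 + s\<^sup>2)^2"
  have Dp: "D > 0" using p by (simp add: D_def)
  have e1: "s * (\<rho> s * inverse (s ^ 2)) = 1 / s" using \<rho>1 True p by (simp add: power2_eq_square field_simps)
  have e2: "s ^ 3 * (inverse (1 + s\<^sup>2))^2 = s ^ 3 / D" by (simp add: D_def power_inverse divide_inverse)
  have e3: "D - s ^ 4 = 1 + 2 * s\<^sup>2" unfolding D_def by (simp add: power2_eq_square algebra_simps power4_eq_xxxx)
  have "1 / s - s ^ 3 / D = (D - s * s ^ 3) / (s * D)" using p Dp by (simp add: field_simps)
  also have "s * s ^ 3 = s ^ 4" by (simp add: power4_eq_xxxx power3_eq_cube)
  finally have eq: "s * (\<rho> s * inverse (s ^ 2)) - s ^ 3 * (inverse (1 + s\<^sup>2))^2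
      = (1 + 2 * s\<^sup>2) / (s * (1 + s\<^sup>2)^2)" using e1 e2 e3 by (simp add: D_def)
  have h: "1 + 2 * s\<^sup>2 \<le> 2 * s * (1 + s\<^sup>2)"
  proof -
    have a1: "s * s * 1 \<le> s * s * s" using True by (intro mult_left_mono) auto
    have "1 + 2 * (s * s) \<le> 2 * s + 2 * (s * s * s)" using a1 True by linarith
    moreover have "2 * s * (1 + s\<^sup>2) = 2 * s + 2 * (s * s * s)" by (simp add: power2_eq_square algebra_simps)
    ultimately show ?thesis by (simp add: power2_eq_square)
  qed
  have "(1 + 2 * s\<^sup>2) / (s * (1 + s\<^sup>2)^2) \<le> 2 * s * (1 + s\<^sup>2) / (s * (1 + s\<^sup>2)^2)"
    using h p by (intro divide_right_mono) auto
  also have "\<dots> = 2 * inverse (1 + s\<^sup>2)"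
  proof -
    have gen: "2 * s * E / (s * E^2) = 2 * inverse E" if "E > 0" for E
      using that p by (simp add: power2_eq_square field_simps)
    show ?thesis by (rule gen) (use p in simp)
  qed
  also have "\<dots> \<le> 5 * (Mr + 1) * inverse (1 + s\<^sup>2)" using Mr p by (intro mult_right_mono) auto
  finally have up: "(1 + 2 * s\<^sup>2) / (s * (1 + s\<^sup>2)^2) \<le> 5 * (Mr + 1) * inverse (1 + s\<^sup>2)" .
  have "0 \<le> (1 + 2 * s\<^sup>2) / (s * (1 + s\<^sup>2)^2)" using p by simp
  thus ?thesis using up eq by simp
next
  case False
  have p: "1 + s\<^sup>2 > 0" by (simp add: add_pos_nonneg)
  have a: "\<bar>s * (\<rho> s * inverse (s ^ 2))\<bar> \<le> Mr"
  proof (cases "s < 1")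
    case True thus ?thesis using \<rho>0 Mr by simp
  next
    case False
    have s1: "s \<ge> 1" using False by simp
    have "\<bar>s * (\<rho> s * inverse (s ^ 2))\<bar> = \<bar>\<rho> s\<bar> / s" using s1 by (simp add: abs_mult power2_eq_square field_simps)
    also have "\<dots> \<le> \<bar>\<rho> s\<bar>" using s1 by (simp add: divide_le_eq mult_le_cancel_left1)
    also have "\<dots> \<le> Mr" using Mr s1 \<open>\<not> s > 2\<close> by auto
    finally show ?thesis .
  qed
  have b: "\<bar>s ^ 3 * (inverse (1 + s\<^sup>2))^2\<bar> \<le> 1"
  proof -
    have "s ^ 3 * (inverse (1 + s\<^sup>2))^2 = (s * inverse (1 + s\<^sup>2)) * (s\<^sup>2 * inverse (1 + s\<^sup>2))"
      by (simp add: power2_eq_square power3_eq_cube)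
    moreover have "0 \<le> (s * inverse (1 + s\<^sup>2)) * (s\<^sup>2 * inverse (1 + s\<^sup>2))"
      "(s * inverse (1 + s\<^sup>2)) * (s\<^sup>2 * inverse (1 + s\<^sup>2)) \<le> 1"
      using qbounds[OF s] by (auto intro: mult_le_one)
    ultimately show ?thesis by simp
  qed
  have "s * s \<le> 2 * 2" using False s by (intro mult_mono) auto
  hence "s\<^sup>2 \<le> 4" by (simp add: power2_eq_square)
  hence "1 \<le> 5 * inverse (1 + s\<^sup>2)" using p by (simp add: field_simps)
  hence "Mr + 1 \<le> (Mr + 1) * (5 * inverse (1 + s\<^sup>2))" using Mr by (simp add: mult_le_cancel_left1)
  thus ?thesis using a b by (simp add: algebra_simps)
qed

definition KK :: "real \<Rightarrow> real \<Rightarrow> real \<Rightarrow> real" where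
  "KK lam C Mr = C + 5 * (Mr + 1) * C + 28 * sqrt lam * C / lam + 58 * C / lam"

definition CP :: "real \<Rightarrow> real \<Rightarrow> real \<Rightarrow> real" where
  "CP lam C Mr = 2 * C / lam + 10 * KK lam C Mr / sqrt lam"

lemma construct:
  fixes lam \<zeta> C Mr \<alpha> k1 k2 k3 :: real and \<rho> \<eta>b :: "real \<Rightarrow> real"
  assumes lam_pos: "lam > 0" and cz: "cos \<zeta> = 0"
    and \<rho>c: "continuous_on UNIV \<rho>" and \<rho>1: "\<forall>r>2. \<rho> r = 1" and \<rho>0: "\<forall>r<1. \<rho> r = 0"
    and Mr: "\<forall>r. 1 \<le> r \<and> r \<le> 2 \<longrightarrow> \<bar>\<rho> r\<bar> \<le> Mr" "Mr \<ge> 0"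
    and \<eta>c: "continuous_on {0..} \<eta>b" and \<eta>bd: "\<forall>r\<ge>0. \<bar>\<eta>b r\<bar> \<le> C / (1 + r) ^ 3"
    and ks: "\<bar>k1\<bar> + \<bar>k2\<bar> + \<bar>k3\<bar> \<le> C"
    and \<alpha>: "0 < \<alpha>" "\<alpha> < 1"
  shows "\<exists>h c1 hbar. solves_radial lam (\<lambda>r. \<rho> r * inverse (r ^ 2) *
                  (k1 * (sin (sqrt lam * r - \<zeta>))^2 + k2 * (cos (sqrt lam * r - \<zeta>))^2
                   + k3 * sin (sqrt lam * r - \<zeta>) * cos (sqrt lam * r - \<zeta>)) + \<eta>b r) h \<and>
            holder_norm \<alpha> {0..} h < \<infinity> \<and>
            (\<forall>r>1. h r = c1 * sin (sqrt lam * r - \<zeta>) / r + hbar r) \<and>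
            \<bar>c1\<bar> \<le> CP lam C Mr \<and>
            (\<forall>r>1. \<bar>hbar r\<bar> \<le> CP lam C Mr * (1 + r) powr (-2))"
proof -
  define k where "k = sqrt lam"
  have kpos: "k > 0" using lam_pos by (simp add: k_def)
  have kk: "k * k = lam" using lam_pos by (simp add: k_def)
  have C0: "C \<ge> 0" using ks by linarith
  define th where "th r = k * r - \<zeta>" for r
  define T where "T r = k1 * (sin (th r))^2 + k2 * (cos (th r))^2 + k3 * sin (th r) * cos (th r)" for r
  define eta where "eta r = \<rho> r * inverse (r ^ 2) * T r + \<eta>b r" for r
  have eta_eq: "(\<lambda>r. \<rho> r * inverse (r ^ 2) *
                  (k1 * (sin (sqrt lam * r - \<zeta>))^2 + k2 * (cos (sqrt lam * r - \<zeta>))^2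
                   + k3 * sin (sqrt lam * r - \<zeta>) * cos (sqrt lam * r - \<zeta>)) + \<eta>b r) = eta"
    by (simp add: fun_eq_iff eta_def T_def th_def k_def)
  define A0 where "A0 = (k1 + k2) / (2 * lam)"
  define A1 where "A1 = - (k2 - k1) / (6 * lam)"
  define A2 where "A2 = - k3 / (6 * lam)"
  define S where "S r = A0 + A1 * cos (2 * th r) + A2 * sin (2 * th r)" for r
  define S1 where "S1 r = - 2 * k * A1 * sin (2 * th r) + 2 * k * A2 * cos (2 * th r)" for r
  define S2 where "S2 r = - 4 * lam * A1 * cos (2 * th r) - 4 * lam * A2 * sin (2 * th r)" for r
  have dS: "(S has_real_derivative S1 r) (at r)" for r
    unfolding S_def S1_def th_def
    apply (rule derivative_eq_intros refl)+
    apply (simp add: algebra_simps)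
    done
  have dS1: "(S1 has_real_derivative S2 r) (at r)" for r
    unfolding S1_def S2_def th_def
    apply (rule derivative_eq_intros refl)+
    apply (simp add: algebra_simps kk[symmetric])
    done
  have ST: "S2 r + lam * S r = T r" for r
  proof -
    have e1: "lam * A0 = (k1 + k2) / 2" "lam * A1 = - (k2 - k1) / 6" "lam * A2 = - k3 / 6"
      using lam_pos by (simp_all add: A0_def A1_def A2_def)
    have gen: "(k1 + k2) / 2 + (k2 - k1) / 2 * (c\<^sup>2 - x\<^sup>2) + k3 / 2 * (2 * x * c)
        = k1 * x\<^sup>2 + k2 * c\<^sup>2 + k3 * x * c" if h: "x\<^sup>2 + c\<^sup>2 = 1" for x c :: real
    proof -
      have xs: "x\<^sup>2 = 1 - c\<^sup>2" using h by simp
      show ?thesis unfolding xs by (simp add: field_simps)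
    qed
    have "S2 r + lam * S r = lam * A0 - 3 * (lam * A1) * cos (2 * th r) - 3 * (lam * A2) * sin (2 * th r)"
      by (simp add: S2_def S_def algebra_simps)
    also have "\<dots> = (k1 + k2) / 2 + (k2 - k1) / 2 * cos (2 * th r) + k3 / 2 * sin (2 * th r)"
      unfolding e1 by (simp add: field_simps)
    also have "\<dots> = T r"
      unfolding T_def cos_double sin_double by (rule gen) simp
    finally show ?thesis .
  qed
  define q where "q r = inverse (1 + r\<^sup>2)" for r :: real
  have qnz: "1 + r\<^sup>2 \<noteq> 0" for r :: real by (smt (verit) zero_le_power2)
  have dq: "(q has_real_derivative (- 2 * r * (q r)^2)) (at r)" for r
    unfolding q_def
    apply (rule derivative_eq_intros refl qnz)+
    apply (simp add: power2_eq_square)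
    done
  define \<phi> where "\<phi> r = r ^ 3 * (q r)^2" for r
  define \<phi>1 where "\<phi>1 r = 3 * r\<^sup>2 * (q r)^2 - 4 * r ^ 4 * (q r)^3" for r
  define \<phi>2 where "\<phi>2 r = 6 * r * (q r)^2 - 28 * r ^ 3 * (q r)^3 + 24 * r ^ 5 * (q r)^4" for r
  have d\<phi>: "(\<phi> has_real_derivative \<phi>1 r) (at r)" for r
    unfolding \<phi>_def \<phi>1_def
    apply (rule derivative_eq_intros refl dq)+
    apply (simp add: algebra_simps eval_nat_numeral)
    done
  have d\<phi>1: "(\<phi>1 has_real_derivative \<phi>2 r) (at r)" for r
    unfolding \<phi>1_def \<phi>2_def
    apply (rule derivative_eq_intros refl dq)+
    apply (simp add: algebra_simps eval_nat_numeral)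
    done
  define w0 where "w0 r = \<phi> r * S r" for r
  define w1 where "w1 r = \<phi>1 r * S r + \<phi> r * S1 r" for r
  have dw0: "(w0 has_real_derivative w1 r) (at r)" for r
    unfolding w0_def w1_def
    by (rule DERIV_cong[OF DERIV_mult[OF d\<phi> dS]]) (simp add: algebra_simps)
  have dw1: "(w1 has_real_derivative (\<phi>2 r * S r + 2 * \<phi>1 r * S1 r + \<phi> r * S2 r)) (at r)" for r
    unfolding w1_def
    by (rule DERIV_cong[OF DERIV_add[OF DERIV_mult[OF d\<phi>1 dS] DERIV_mult[OF d\<phi> dS1]]]) (simp add: algebra_simps)
  have Asum: "\<bar>A0\<bar> + \<bar>A1\<bar> + \<bar>A2\<bar> \<le> C / lam"
  proof -
    have "\<bar>A0\<bar> + \<bar>A1\<bar> + \<bar>A2\<bar> = (3 * \<bar>k1 + k2\<bar> + \<bar>k2 - k1\<bar> + \<bar>k3\<bar>) / (6 * lam)"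
      using lam_pos by (simp add: A0_def A1_def A2_def abs_divide field_simps)
    also have "\<dots> \<le> (6 * C) / (6 * lam)"
    proof (rule divide_right_mono)
      have "\<bar>k1 + k2\<bar> \<le> \<bar>k1\<bar> + \<bar>k2\<bar>" "\<bar>k2 - k1\<bar> \<le> \<bar>k1\<bar> + \<bar>k2\<bar>" by (rule abs_triangle_ineq, rule abs_triangle_ineq4[THEN order_trans]) simp
      thus "3 * \<bar>k1 + k2\<bar> + \<bar>k2 - k1\<bar> + \<bar>k3\<bar> \<le> 6 * C" using ks abs_ge_zero[of k1] abs_ge_zero[of k2] abs_ge_zero[of k3] by linarith
    qed (use lam_pos in simp)
    also have "\<dots> = C / lam" by simp
    finally show ?thesis .
  qed
  have Sb: "\<bar>S r\<bar> \<le> C / lam" for r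
    unfolding S_def using lin_trig_bound[where x="cos (2 * th r)" and y="sin (2 * th r)" and a=A0 and b=A1 and c=A2] Asum by simp
  have S1b: "\<bar>S1 r\<bar> \<le> 2 * k * C / lam" for r
  proof -
    have "\<bar>S1 r\<bar> \<le> \<bar>0\<bar> + \<bar>- 2 * k * A1\<bar> + \<bar>2 * k * A2\<bar>"
      unfolding S1_def using lin_trig_bound[where x="sin (2 * th r)" and y="cos (2 * th r)" and a=0 and b="- 2 * k * A1" and c="2 * k * A2"] by simp
    also have "\<dots> = 2 * k * (\<bar>A1\<bar> + \<bar>A2\<bar>)" using kpos by (simp add: abs_mult algebra_simps)
    also have "\<dots> \<le> 2 * k * (C / lam)" using Asum kpos by (intro mult_left_mono) auto
    finally show ?thesis by simp
  qed
  have Tb: "\<bar>T r\<bar> \<le> C" for r unfolding T_def using T_bound[of k1 "th r" k2 k3] ks by linarith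
  have R0eq: "\<rho> r * inverse (r ^ 2) = \<rho> r * inverse (max (r ^ 2) 1)" for r
  proof (cases "r ^ 2 < 1")
    case True
    hence "r < 1" by (metis abs_square_less_1 abs_less_iff)
    thus ?thesis using \<rho>0 by simp
  next
    case False thus ?thesis by simp
  qed
  have R0c: "continuous_on UNIV (\<lambda>r. \<rho> r * inverse (r ^ 2))"
    unfolding R0eq by (intro continuous_intros \<rho>c) auto
  have cS: "continuous_on UNIV S" by (intro continuous_at_imp_continuous_on ballI DERIV_isCont[OF dS])
  have cS1: "continuous_on UNIV S1" by (intro continuous_at_imp_continuous_on ballI DERIV_isCont[OF dS1])
  have c\<phi>: "continuous_on UNIV \<phi>" by (intro continuous_at_imp_continuous_on ballI DERIV_isCont[OF d\<phi>])
  have c\<phi>1: "continuous_on UNIV \<phi>1" by (intro continuous_at_imp_continuous_on ballI DERIV_isCont[OF d\<phi>1])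
  have c\<phi>2: "continuous_on UNIV \<phi>2" unfolding \<phi>2_def q_def by (intro continuous_intros) (use qnz in auto)
  have cT: "continuous_on UNIV T" unfolding T_def th_def by (intro continuous_intros)
  define g1 where "g1 r = r * eta r - (\<phi>2 r * S r + 2 * \<phi>1 r * S1 r + \<phi> r * T r)" for r
  have cg1: "continuous_on {0..} g1"
    unfolding g1_def eta_def
    by (intro continuous_intros continuous_on_subset[OF R0c] continuous_on_subset[OF cT]
        continuous_on_subset[OF cS] continuous_on_subset[OF cS1] continuous_on_subset[OF c\<phi>]
        continuous_on_subset[OF c\<phi>1] continuous_on_subset[OF c\<phi>2] \<eta>c) auto
  define K where "K = KK lam C Mr"
  have g1b: "\<bar>g1 s\<bar> \<le> K * q s" if s: "s \<ge> 0" for s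
  proof -
    define a where "a = s * q s"
    define b where "b = s\<^sup>2 * q s"
    have ab: "0 \<le> a" "a \<le> 1" "0 \<le> b" "b \<le> 1" "0 < q s"
      using qbounds[OF s] by (simp_all add: a_def b_def q_def)
    note pb = prod_unit_bound[OF ab(1-4) less_imp_le[OF ab(5)]] prod_unit_bound[OF ab(3,4,3,4) less_imp_le[OF ab(5)]]
    have \<phi>1e: "\<phi>1 s = 3 * (b * q s) - 4 * (b\<^sup>2 * q s)"
      by (simp add: \<phi>1_def b_def eval_nat_numeral algebra_simps)
    have \<phi>2e: "\<phi>2 s = 6 * (a * q s) - 28 * (a * b * q s) + 24 * (a * b\<^sup>2 * q s)"
      by (simp add: \<phi>2_def a_def b_def eval_nat_numeral algebra_simps)
    have b2q: "0 \<le> b\<^sup>2 * q s" using ab by simp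
    have \<phi>1b: "\<bar>\<phi>1 s\<bar> \<le> 7 * q s" unfolding \<phi>1e using pb b2q by (simp only: abs_le_iff) linarith
    have \<phi>2b: "\<bar>\<phi>2 s\<bar> \<le> 58 * q s" unfolding \<phi>2e using pb by (simp only: abs_le_iff) linarith
    have ge: "g1 s = s * \<eta>b s + (s * (\<rho> s * inverse (s ^ 2)) - s ^ 3 * (inverse (1 + s\<^sup>2))^2) * T s
        - 2 * \<phi>1 s * S1 s - \<phi>2 s * S s"
      by (simp add: g1_def eta_def \<phi>_def q_def algebra_simps)
    have t1: "\<bar>s * \<eta>b s\<bar> \<le> C * q s" unfolding q_def by (rule eta_bar_bound) (use s \<eta>bd in auto)
    have t2: "\<bar>(s * (\<rho> s * inverse (s ^ 2)) - s ^ 3 * (inverse (1 + s\<^sup>2))^2) * T s\<bar> \<le> 5 * (Mr + 1) * q s * C"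
      unfolding abs_mult q_def
      by (intro mult_mono rho_phi_bound[OF s \<rho>1 \<rho>0 Mr] Tb) (use Mr ab(5) in \<open>auto simp: q_def\<close>)
    have t3: "\<bar>2 * \<phi>1 s * S1 s\<bar> \<le> 2 * (7 * q s) * (2 * k * C / lam)"
      unfolding abs_mult by (intro mult_mono \<phi>1b S1b) (use ab(5) in auto)
    have t4: "\<bar>\<phi>2 s * S s\<bar> \<le> 58 * q s * (C / lam)"
      unfolding abs_mult by (intro mult_mono \<phi>2b Sb) (use ab(5) in auto)
    have "\<bar>g1 s\<bar> \<le> C * q s + 5 * (Mr + 1) * q s * C + 2 * (7 * q s) * (2 * k * C / lam) + 58 * q s * (C / lam)"
      unfolding ge using t1 t2 t3 t4 by linarith
    also have "\<dots> = K * q s" by (simp add: K_def KK_def k_def algebra_simps)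
    finally show ?thesis .
  qed
  have K0: "K \<ge> 0" using g1b[of 0] by (simp add: q_def)
  define P where "P r = integral {0..r} (\<lambda>s. cos (k * s) * g1 s)" for r
  define Q where "Q r = integral {0..r} (\<lambda>s. sin (k * s) * g1 s)" for r
  have cPg: "continuous_on {0..} (\<lambda>s. cos (k * s) * g1 s)" by (intro continuous_intros cg1)
  have cQg: "continuous_on {0..} (\<lambda>s. sin (k * s) * g1 s)" by (intro continuous_intros cg1)
  have bPg: "\<bar>cos (k * s) * g1 s\<bar> \<le> K / (1 + s\<^sup>2)" if "s \<ge> 0" for s
  proof -
    have "\<bar>cos (k * s) * g1 s\<bar> \<le> \<bar>g1 s\<bar>" using abs_mult_le1[OF abs_cos_le_one, of "g1 s" "k * s"] by (simp add: mult.commute)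
    also have "\<dots> \<le> K * q s" using g1b[OF that] .
    finally show ?thesis by (simp add: q_def divide_inverse)
  qed
  have bQg: "\<bar>sin (k * s) * g1 s\<bar> \<le> K / (1 + s\<^sup>2)" if "s \<ge> 0" for s
  proof -
    have "\<bar>sin (k * s) * g1 s\<bar> \<le> \<bar>g1 s\<bar>" using abs_mult_le1[OF abs_sin_le_one, of "g1 s" "k * s"] by (simp add: mult.commute)
    also have "\<dots> \<le> K * q s" using g1b[OF that] .
    finally show ?thesis by (simp add: q_def divide_inverse)
  qed
  obtain Pinf where Pinf: "\<And>r. r \<ge> 0 \<Longrightarrow> \<bar>P r - Pinf\<bar> \<le> K * (pi / 2 - arctan r)"
    using tail_limit[OF cPg bPg] unfolding P_def by blast
  obtain Qinf where Qinf: "\<And>r. r \<ge> 0 \<Longrightarrow> \<bar>Q r - Qinf\<bar> \<le> K * (pi / 2 - arctan r)"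
    using tail_limit[OF cQg bQg] unfolding Q_def by blast
  have dP: "(P has_real_derivative cos (k * r) * g1 r) (at r)" if r: "r > 0" for r
  proof -
    have "continuous_on {0..r+1} (\<lambda>s. cos (k * s) * g1 s)" by (rule continuous_on_subset[OF cPg]) auto
    from integral_has_real_derivative[OF this, of r] r
    show ?thesis unfolding P_def by (simp add: at_within_Icc_at)
  qed
  have dQ: "(Q has_real_derivative sin (k * r) * g1 r) (at r)" if r: "r > 0" for r
  proof -
    have "continuous_on {0..r+1} (\<lambda>s. sin (k * s) * g1 s)" by (rule continuous_on_subset[OF cQg]) auto
    from integral_has_real_derivative[OF this, of r] r
    show ?thesis unfolding Q_def by (simp add: at_within_Icc_at)
  qed
  have cP: "continuous_on {0..b} P" for b
    unfolding P_def by (intro indefinite_integral_continuous_1 integrable_continuous_interval continuous_on_subset[OF cPg]) auto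
  have cQ: "continuous_on {0..b} Q" for b
    unfolding Q_def by (intro indefinite_integral_continuous_1 integrable_continuous_interval continuous_on_subset[OF cQg]) auto
  have kne: "k \<noteq> 0" "k * k \<noteq> 0" using kpos by auto
  define v where "v r = w0 r + (sin (k * r) * P r - cos (k * r) * Q r - Pinf * sin (k * r)) / k" for r
  define vd where "vd r = w1 r + cos (k * r) * P r + sin (k * r) * Q r - Pinf * cos (k * r)" for r
  have dv: "(v has_real_derivative vd r) (at r)" if r: "r > 0" for r
    unfolding v_def vd_def
    apply (rule derivative_eq_intros dw0 dP[OF r] dQ[OF r] refl kne)+
    using kpos apply (simp add: field_simps)
    done
  have dvd: "(vd has_real_derivative (r * eta r - lam * v r)) (at r)" if r: "r > 0" for r
  proof -
    have one: "g1 r * (cos (k * r) * cos (k * r)) + g1 r * (sin (k * r) * sin (k * r)) = g1 r"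
      by (metis distrib_left mult_1_right sin_cos_squared_add3)
    have "(vd has_real_derivative
      ((\<phi>2 r * S r + 2 * \<phi>1 r * S1 r + \<phi> r * S2 r) + (g1 r * (cos (k * r) * cos (k * r)) + g1 r * (sin (k * r) * sin (k * r)))
        - k * (sin (k * r) * P r - cos (k * r) * Q r - Pinf * sin (k * r)))) (at r)"
      unfolding vd_def
      apply (rule derivative_eq_intros dw1 dP[OF r] dQ[OF r] refl)+
      apply (simp add: algebra_simps)
      done
    moreover have "(\<phi>2 r * S r + 2 * \<phi>1 r * S1 r + \<phi> r * S2 r) + (g1 r * (cos (k * r) * cos (k * r)) + g1 r * (sin (k * r) * sin (k * r)))
        - k * (sin (k * r) * P r - cos (k * r) * Q r - Pinf * sin (k * r)) = r * eta r - lam * v r"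
    proof -
      have s2: "S2 r = T r - lam * S r" using ST[of r] by simp
      have lv: "lam * v r = lam * w0 r + k * (sin (k * r) * P r - cos (k * r) * Q r - Pinf * sin (k * r))"
        unfolding v_def using kpos kk[symmetric] by (simp add: field_simps)
      show ?thesis unfolding one using lv by (simp add: s2 g1_def w0_def algebra_simps)
    qed
    ultimately show ?thesis by simp
  qed
  define h where "h r = (if r = 0 then - Pinf else v r / r)" for r
  have sol: "solves_radial lam eta h"
    by (rule radial_from_u[OF dv dvd]) (auto simp: h_def)
  have phib: "\<bar>\<phi>1 s\<bar> \<le> 7 \<and> \<bar>\<phi>2 s\<bar> \<le> 58 \<and> \<bar>\<phi> s\<bar> \<le> 1 \<and> \<bar>\<phi> s\<bar> \<le> s * q s \<and> q s \<le> 1 \<and> 0 < q s"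
    if s: "s \<ge> 0" for s
  proof -
    define a where "a = s * q s"
    define b where "b = s\<^sup>2 * q s"
    have ab: "0 \<le> a" "a \<le> 1" "0 \<le> b" "b \<le> 1" "0 < q s"
      using qbounds[OF s] by (simp_all add: a_def b_def q_def)
    have q1: "q s \<le> 1" using qbounds[OF s] by (simp add: q_def)
    note pb = prod_unit_bound[OF ab(1-4) less_imp_le[OF ab(5)]] prod_unit_bound[OF ab(3,4,3,4) less_imp_le[OF ab(5)]]
    have \<phi>1e: "\<phi>1 s = 3 * (b * q s) - 4 * (b\<^sup>2 * q s)"
      by (simp add: \<phi>1_def b_def eval_nat_numeral algebra_simps)
    have \<phi>2e: "\<phi>2 s = 6 * (a * q s) - 28 * (a * b * q s) + 24 * (a * b\<^sup>2 * q s)"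
      by (simp add: \<phi>2_def a_def b_def eval_nat_numeral algebra_simps)
    have \<phi>e: "\<phi> s = a * b" by (simp add: \<phi>_def a_def b_def eval_nat_numeral algebra_simps)
    have b2q: "0 \<le> b\<^sup>2 * q s" using ab by simp
    have "\<bar>\<phi>1 s\<bar> \<le> 7 * q s" unfolding \<phi>1e using pb b2q by (simp only: abs_le_iff) linarith
    moreover have "\<bar>\<phi>2 s\<bar> \<le> 58 * q s" unfolding \<phi>2e using pb by (simp only: abs_le_iff) linarith
    moreover have "0 \<le> a * b" "a * b \<le> 1" "a * b \<le> a" using ab by (auto simp: mult_le_one mult_left_le)
    ultimately show ?thesis unfolding \<phi>e using q1 ab by (auto simp: a_def)
  qed
  have Pinf0: "\<bar>Pinf\<bar> \<le> 2 * K" and Qinf0: "\<bar>Qinf\<bar> \<le> 2 * K"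
  proof -
    have "pi / 2 \<le> 2" using pi_less_4 by simp
    hence "K * (pi / 2) \<le> 2 * K" using K0 by (simp add: mult_left_mono mult.commute)
    thus "\<bar>Pinf\<bar> \<le> 2 * K" "\<bar>Qinf\<bar> \<le> 2 * K" using Pinf[of 0] Qinf[of 0] by (auto simp: P_def Q_def)
  qed
  have Pb: "\<bar>P s - Pinf\<bar> \<le> 2 * K" "\<bar>Q s - Qinf\<bar> \<le> 2 * K" if "s \<ge> 0" for s
  proof -
    have "0 \<le> arctan s" using arctan_monotone'[of 0 s] that by simp
    hence "pi / 2 - arctan s \<le> 2" using pi_less_4 by linarith
    hence "K * (pi / 2 - arctan s) \<le> 2 * K" using K0 by (simp add: mult_left_mono mult.commute)
    thus "\<bar>P s - Pinf\<bar> \<le> 2 * K" "\<bar>Q s - Qinf\<bar> \<le> 2 * K" using Pinf[OF that] Qinf[OF that] by auto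
  qed
  have sz: "sin \<zeta> * sin \<zeta> = 1" using cz sin_cos_squared_add[of \<zeta>] by (simp add: power2_eq_square)
  define c1 where "c1 = Qinf * sin \<zeta> / k"
  define hbar where "hbar r = h r - c1 * sin (sqrt lam * r - \<zeta>) / r" for r
  have CPe: "CP lam C Mr = 2 * (C / lam) + 10 * (K / k)" by (simp add: CP_def K_def k_def)
  have Ck: "0 \<le> C / lam" "0 \<le> K / k" using C0 lam_pos K0 kpos by auto
  have c1b: "\<bar>c1\<bar> \<le> CP lam C Mr"
  proof -
    have "\<bar>c1\<bar> = \<bar>Qinf\<bar> * \<bar>sin \<zeta>\<bar> / k" using kpos by (simp add: c1_def abs_mult)
    also have "\<dots> \<le> (2 * K) * 1 / k"
      using Qinf0 kpos by (intro divide_right_mono mult_mono) auto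
    also have "\<dots> \<le> CP lam C Mr" unfolding CPe using Ck by simp
    finally show ?thesis .
  qed
  have hbarb: "\<bar>hbar r\<bar> \<le> CP lam C Mr * (1 + r) powr (-2)" if r: "r > 1" for r
  proof -
    have r0: "r > 0" "r \<ge> 0" using r by auto
    have sinz: "sin (sqrt lam * r - \<zeta>) = - cos (k * r) * sin \<zeta>"
      by (simp add: sin_diff cz k_def)
    have cs: "c1 * sin (sqrt lam * r - \<zeta>) = - Qinf * cos (k * r) / k"
      unfolding sinz c1_def using sz by (simp add: field_simps)
    define E where "E = sin (k * r) * (P r - Pinf) - cos (k * r) * (Q r - Qinf)"
    have he: "hbar r = (w0 r + E / k) / r"
      unfolding hbar_def h_def cs E_def v_def using r0 kpos by (simp add: field_simps)
    have Eb: "\<bar>E\<bar> \<le> 2 * K / r"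
    proof -
      have "\<bar>sin (k * r) * (P r - Pinf)\<bar> \<le> \<bar>P r - Pinf\<bar>"
        using abs_mult_le1[OF abs_sin_le_one, of "P r - Pinf" "k * r"] by (simp add: mult.commute)
      moreover have "\<bar>cos (k * r) * (Q r - Qinf)\<bar> \<le> \<bar>Q r - Qinf\<bar>"
        using abs_mult_le1[OF abs_cos_le_one, of "Q r - Qinf" "k * r"] by (simp add: mult.commute)
      moreover have "K * (pi / 2 - arctan r) \<le> K * (1 / r)"
        using arctan_tail[OF r0(1)] K0 by (intro mult_left_mono) auto
      ultimately have "\<bar>E\<bar> \<le> 2 * (K * (1 / r))" unfolding E_def
        using Pinf[OF r0(2)] Qinf[OF r0(2)] by linarith
      thus ?thesis by simp
    qed
    have w0b: "\<bar>w0 r\<bar> \<le> r * q r * (C / lam)"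
    proof -
      have "\<bar>w0 r\<bar> = \<bar>\<phi> r\<bar> * \<bar>S r\<bar>" by (simp add: w0_def abs_mult)
      also have "\<dots> \<le> (r * q r) * (C / lam)"
        using phib[OF r0(2)] Sb[of r] by (intro mult_mono) auto
      finally show ?thesis .
    qed
    have "\<bar>hbar r\<bar> \<le> (\<bar>w0 r\<bar> + \<bar>E\<bar> / k) / r"
      unfolding he using r0 kpos
      by (simp add: abs_divide divide_right_mono abs_triangle_ineq[THEN order_trans])
    also have "\<dots> \<le> (r * q r * (C / lam) + 2 * K / r / k) / r"
      using w0b Eb r0 kpos by (intro divide_right_mono add_mono) auto
    also have "\<dots> = q r * (C / lam) + 2 * (K / k) * (1 / (r * r))"
      using r0 kpos by (simp add: field_simps)
    also have "\<dots> \<le> (2 / (1 + r)\<^sup>2) * (C / lam) + 2 * (K / k) * (4 / (1 + r)\<^sup>2)"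
    proof (intro add_mono mult_right_mono mult_left_mono Ck)
      have "2 * r \<le> 1 + r\<^sup>2" using sum_squares_ge_zero[of "r - 1" 0] by (simp add: power2_eq_square algebra_simps)
      hence "(1 + r)\<^sup>2 \<le> 2 * (1 + r\<^sup>2)" by (simp add: power2_eq_square algebra_simps)
      thus "q r \<le> 2 / (1 + r)\<^sup>2" using r0 by (simp add: q_def field_simps add_pos_nonneg)
      have "(1 + r) * (1 + r) \<le> (2 * r) * (2 * r)" using r by (intro mult_mono) auto
      thus "1 / (r * r) \<le> 4 / (1 + r)\<^sup>2" using r0 by (simp add: field_simps power2_eq_square)
    qed (use K0 kpos in auto)
    also have "\<dots> = (2 * (C / lam) + 8 * (K / k)) * inverse ((1 + r)\<^sup>2)"
    proof -
      have "1 + r \<noteq> 0" using r0 by simp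
      thus ?thesis using lam_pos kpos by (simp add: field_simps)
    qed
    also have "\<dots> \<le> CP lam C Mr * inverse ((1 + r)\<^sup>2)" unfolding CPe
      using Ck r0 by (intro mult_right_mono) auto
    also have "inverse ((1 + r)\<^sup>2) = (1 + r) powr (-2)" using r0 by (simp add: powr_minus)
    finally show ?thesis .
  qed
  have v0: "v 0 = 0" by (simp add: v_def w0_def \<phi>_def P_def Q_def)
  have vd0: "vd 0 = - Pinf" by (simp add: vd_def w1_def \<phi>1_def \<phi>_def P_def Q_def)
  define Bv where "Bv = 9 * (C / lam) + 2 * k * (C / lam) + 10 * (K / k) + 10 * K"
  have vb: "\<bar>v s\<bar> \<le> Bv \<and> \<bar>vd s\<bar> \<le> Bv" if s: "s \<ge> 0" for s
  proof -
    note pp = phib[OF s]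
    have a1: "\<bar>w0 s\<bar> \<le> 1 * (C / lam)" unfolding w0_def abs_mult
      using pp Sb[of s] by (intro mult_mono) auto
    have a2: "\<bar>\<phi>1 s * S s\<bar> \<le> 7 * (C / lam)" unfolding abs_mult using pp Sb[of s] by (intro mult_mono) auto
    have a3: "\<bar>\<phi> s * S1 s\<bar> \<le> 1 * (2 * k * C / lam)" unfolding abs_mult using pp S1b[of s] by (intro mult_mono) auto
    have PP: "\<bar>P s\<bar> \<le> 4 * K" "\<bar>Q s\<bar> \<le> 4 * K" using Pb[OF s] Pinf0 Qinf0 by linarith+
    have t1: "\<bar>sin (k * s) * P s\<bar> \<le> 4 * K" "\<bar>cos (k * s) * Q s\<bar> \<le> 4 * K"
      "\<bar>cos (k * s) * P s\<bar> \<le> 4 * K" "\<bar>sin (k * s) * Q s\<bar> \<le> 4 * K"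
      "\<bar>Pinf * sin (k * s)\<bar> \<le> 2 * K" "\<bar>Pinf * cos (k * s)\<bar> \<le> 2 * K"
      using abs_mult_le1'[OF abs_sin_le_one, of "k * s" "P s"] abs_mult_le1'[OF abs_cos_le_one, of "k * s" "Q s"]
        abs_mult_le1'[OF abs_cos_le_one, of "k * s" "P s"] abs_mult_le1'[OF abs_sin_le_one, of "k * s" "Q s"]
        abs_mult_le1[OF abs_sin_le_one, of "Pinf" "k * s"] abs_mult_le1[OF abs_cos_le_one, of "Pinf" "k * s"]
        PP Pinf0 by linarith+
    have "\<bar>sin (k * s) * P s - cos (k * s) * Q s - Pinf * sin (k * s)\<bar> \<le> 10 * K" using t1 by linarith
    hence "\<bar>(sin (k * s) * P s - cos (k * s) * Q s - Pinf * sin (k * s)) / k\<bar> \<le> 10 * K / k"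
      using kpos by (simp add: abs_divide divide_right_mono)
    hence "\<bar>v s\<bar> \<le> C / lam + 10 * (K / k)" unfolding v_def using a1 by linarith
    moreover have "\<bar>vd s\<bar> \<le> 7 * (C / lam) + 2 * k * C / lam + 10 * K"
      unfolding vd_def w1_def using a2 a3 t1 by linarith
    moreover have "0 \<le> k * (C / lam)" using kpos Ck by (intro mult_nonneg_nonneg) auto
    moreover have "2 * k * C / lam = 2 * (k * (C / lam))" by simp
    ultimately show ?thesis unfolding Bv_def using Ck K0 by auto
  qed
  define Bg where "Bg = K + 58 * (C / lam) + 28 * k * (C / lam) + C"
  define M where "M = Bg + lam * Bv"
  have v2b: "\<bar>s * eta s - lam * v s\<bar> \<le> M" if s: "s \<ge> 0" for s
  proof -
    note pp = phib[OF s]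
    have e: "s * eta s = g1 s + (\<phi>2 s * S s + 2 * \<phi>1 s * S1 s + \<phi> s * T s)" by (simp add: g1_def)
    have b1: "\<bar>g1 s\<bar> \<le> K" using g1b[OF s] pp K0 mult_left_mono[of "q s" 1 K] by linarith
    have b2: "\<bar>\<phi>2 s * S s\<bar> \<le> 58 * (C / lam)" unfolding abs_mult using pp Sb[of s] by (intro mult_mono) auto
    have b3: "\<bar>\<phi>1 s * S1 s\<bar> \<le> 7 * (2 * k * C / lam)" unfolding abs_mult using pp S1b[of s] by (intro mult_mono) auto
    have b4: "\<bar>\<phi> s * T s\<bar> \<le> 1 * C" unfolding abs_mult using pp Tb[of s] by (intro mult_mono) auto
    have b5: "\<bar>lam * v s\<bar> \<le> lam * Bv" using vb[OF s] lam_pos by (simp add: abs_mult)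
    have b3': "\<bar>2 * \<phi>1 s * S1 s\<bar> = 2 * \<bar>\<phi>1 s * S1 s\<bar>" by (simp add: abs_mult)
    have b3'': "2 * (7 * (2 * k * C / lam)) = 28 * k * (C / lam)" by simp
    have tri: "\<bar>a + (b + c + d)\<bar> \<le> \<bar>a\<bar> + \<bar>b\<bar> + \<bar>c\<bar> + \<bar>d\<bar>" for a b c d :: real
      using abs_triangle_ineq[of a "b+c+d"] abs_triangle_ineq[of "b+c" d] abs_triangle_ineq[of b c] by linarith
    have "\<bar>s * eta s\<bar> \<le> Bg" unfolding e Bg_def
      using tri[of "g1 s" "\<phi>2 s * S s" "2 * \<phi>1 s * S1 s" "\<phi> s * T s"] b1 b2 b3 b3' b3'' b4 by linarith
    thus ?thesis unfolding M_def using b5 by linarith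
  qed
  have cw0: "continuous_on UNIV w0" by (intro continuous_at_imp_continuous_on ballI DERIV_isCont[OF dw0])
  have cw1: "continuous_on UNIV w1" by (intro continuous_at_imp_continuous_on ballI DERIV_isCont[OF dw1])
  have cv: "continuous_on {0..b} v" for b
    unfolding v_def by (intro continuous_intros cP cQ continuous_on_subset[OF cw0]) (use kpos in auto)
  have cvd: "continuous_on {0..b} vd" for b
    unfolding vd_def by (intro continuous_intros cP cQ continuous_on_subset[OF cw1]) auto
  have psib: "\<bar>r * vd r - v r\<bar> \<le> M * r * r" if r: "r > 0" for r
  proof -
    have cont: "continuous_on {0..r} (\<lambda>s. s * vd s - v s)" by (intro continuous_intros cv cvd)
    have dpsi: "((\<lambda>s. s * vd s - v s) has_real_derivative z * (z * eta z - lam * v z)) (at z)" if "z > 0" for z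
      by (rule DERIV_cong[OF DERIV_diff[OF DERIV_mult[OF DERIV_ident dvd[OF that]] dv[OF that]]]) simp
    have diff: "(\<lambda>s. s * vd s - v s) differentiable (at z)" if "0 < z" "z < r" for z
      using dpsi[OF that(1)] unfolding real_differentiable_def by blast
    obtain l z where zz: "0 < z" "z < r" "((\<lambda>s. s * vd s - v s) has_real_derivative l) (at z)"
      and eq: "(r * vd r - v r) - (0 * vd 0 - v 0) = (r - 0) * l"
      using MVT[OF r cont diff] by blast
    have "l = z * (z * eta z - lam * v z)" using DERIV_unique[OF zz(3) dpsi[OF zz(1)]] .
    hence "\<bar>l\<bar> \<le> r * M" using v2b[of z] zz by (simp add: abs_mult) (intro mult_mono, auto)
    hence "\<bar>r * vd r - v r\<bar> \<le> r * (r * M)" using eq v0 r by (simp add: abs_mult mult_left_mono)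
    thus ?thesis by (simp add: algebra_simps)
  qed
  have vdb: "\<bar>vd r - vd 0\<bar> \<le> M * r" if r: "r > 0" for r
  proof -
    have diff: "vd differentiable (at z)" if "0 < z" "z < r" for z
      using dvd[OF that(1)] unfolding real_differentiable_def by blast
    obtain l z where zz: "0 < z" "z < r" "(vd has_real_derivative l) (at z)"
      and eq: "vd r - vd 0 = (r - 0) * l"
      using MVT[OF r cvd diff] by blast
    have "l = z * eta z - lam * v z" using DERIV_unique[OF zz(3) dvd[OF zz(1)]] .
    hence "\<bar>l\<bar> \<le> M" using v2b[of z] zz by simp
    thus ?thesis using eq r by (simp add: abs_mult mult_left_mono mult.commute)
  qed
  define hd where "hd r = (vd r * r - v r * 1) / (r * r)" for r
  have dh: "(h has_real_derivative hd r) (at r)" if r: "r > 0" for r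
  proof -
    have "((\<lambda>x. v x / x) has_real_derivative hd r) (at r)"
      unfolding hd_def using DERIV_divide[OF dv[OF r] DERIV_ident] r by simp
    thus ?thesis
      by (rule has_field_derivative_transform_within_open[where S="{0<..}"]) (use r in \<open>auto simp: h_def\<close>)
  qed
  define L where "L = 2 * M + 2 * Bv + 2 * K"
  have M0: "M \<ge> 0" using v2b[of 0] by simp
  have Bv0: "Bv \<ge> 0" using vb[of 0] by (meson abs_ge_zero order_trans order_refl)
  have hdb: "\<bar>hd r\<bar> \<le> L" if r: "r > 0" for r
  proof (cases "r \<le> 1")
    case True
    have "\<bar>hd r\<bar> = \<bar>r * vd r - v r\<bar> / (r * r)" by (simp add: hd_def abs_divide algebra_simps)
    also have "\<dots> \<le> M * r * r / (r * r)" using psib[OF r] r by (intro divide_right_mono) auto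
    also have "\<dots> = M" using r by simp
    finally show ?thesis unfolding L_def using M0 Bv0 K0 by linarith
  next
    case False
    have "\<bar>vd r * r - v r * 1\<bar> \<le> \<bar>vd r\<bar> * r + \<bar>v r\<bar>"
      using abs_triangle_ineq4[of "vd r * r" "v r"] r by (simp add: abs_mult)
    hence "\<bar>hd r\<bar> \<le> (\<bar>vd r\<bar> * r + \<bar>v r\<bar>) / (r * r)"
    proof -
      have "\<bar>r * r\<bar> = r * r" by simp
      thus ?thesis unfolding hd_def abs_divide using r \<open>\<bar>vd r * r - v r * 1\<bar> \<le> \<bar>vd r\<bar> * r + \<bar>v r\<bar>\<close>
        by (metis divide_right_mono zero_le_mult_iff less_imp_le)
    qed
    also have "\<dots> \<le> (Bv * r + Bv * r) / (r * r)"
    proof -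
      have "Bv * 1 \<le> Bv * r" using False Bv0 by (intro mult_left_mono) auto
      thus ?thesis using vb[of r] r False by (intro divide_right_mono add_mono mult_right_mono) auto
    qed
    also have "\<dots> = 2 * Bv / r" using r by (simp add: field_simps)
    also have "\<dots> \<le> 2 * Bv" using False Bv0 by (simp add: divide_le_eq mult_le_cancel_left1)
    finally show ?thesis unfolding L_def using M0 Bv0 K0 by linarith
  qed
  have h0: "h 0 = - Pinf" by (simp add: h_def)
  have hz: "\<bar>h r - h 0\<bar> \<le> L * r" if r: "r > 0" for r
  proof (cases "r \<le> 1")
    case True
    have "h r - h 0 = (vd r - vd 0) - (r * vd r - v r) / r"
      using r by (simp add: h_def vd0 field_simps)
    moreover have "\<bar>(r * vd r - v r) / r\<bar> = \<bar>r * vd r - v r\<bar> / r" using r by (simp add: abs_divide)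
    ultimately have "\<bar>h r - h 0\<bar> \<le> \<bar>vd r - vd 0\<bar> + \<bar>r * vd r - v r\<bar> / r"
      using abs_triangle_ineq4[of "vd r - vd 0" "(r * vd r - v r) / r"] by (simp only:)
    also have "\<dots> \<le> M * r + M * r * r / r"
      using vdb[OF r] psib[OF r] r by (intro add_mono divide_right_mono) auto
    also have "\<dots> = 2 * M * r" using r by simp
    also have "\<dots> \<le> L * r" unfolding L_def using r Bv0 K0 by (intro mult_right_mono) auto
    finally show ?thesis .
  next
    case False
    have "\<bar>h r\<bar> = \<bar>v r\<bar> / r" using r by (simp add: h_def abs_divide)
    also have "\<dots> \<le> \<bar>v r\<bar>" using False by (simp add: divide_le_eq mult_le_cancel_left1)
    also have "\<dots> \<le> Bv" using vb[of r] r by simp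
    finally have "\<bar>h r - h 0\<bar> \<le> Bv + 2 * K" using Pinf0 h0 by linarith
    also have "\<dots> \<le> (Bv + 2 * K) * r" using False Bv0 K0 by (simp add: mult_le_cancel_left1)
    also have "\<dots> \<le> L * r" unfolding L_def using r M0 Bv0 by (intro mult_right_mono) auto
    finally show ?thesis .
  qed
  have lip: "\<And>x y. x \<ge> 0 \<Longrightarrow> y \<ge> 0 \<Longrightarrow> \<bar>h x - h y\<bar> \<le> L * \<bar>x - y\<bar>"
    by (rule lipschitz2[OF dh hdb hz])
  have hb: "\<bar>h x\<bar> \<le> 2 * K + L" if "x \<ge> 0" for x
  proof (cases "x \<le> 1")
    case True
    have "\<bar>h x - h 0\<bar> \<le> L * \<bar>x - 0\<bar>" using lip[OF that, of 0] by simp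
    also have "\<dots> \<le> L * 1" using True that M0 Bv0 K0 by (intro mult_left_mono) (auto simp: L_def)
    finally show ?thesis using h0 Pinf0 by linarith
  next
    case False
    have "\<bar>h x\<bar> = \<bar>v x\<bar> / x" using False by (simp add: h_def abs_divide)
    also have "\<dots> \<le> \<bar>v x\<bar>" using False by (simp add: divide_le_eq mult_le_cancel_left1)
    also have "\<dots> \<le> Bv" using vb[of x] that by simp
    finally show ?thesis unfolding L_def using M0 K0 by linarith
  qed
  have hol: "holder_norm \<alpha> {0..} h < \<infinity>"
    by (rule holder_finite[OF \<alpha>(1) less_imp_le[OF \<alpha>(2)], of _ h "2 * K + L" L])
       (use hb lip K0 M0 Bv0 in \<open>auto simp: L_def\<close>)
  show ?thesis
    unfolding eta_eq
  proof (intro exI conjI allI impI)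
    show "solves_radial lam eta h" by (rule sol)
    show "holder_norm \<alpha> {0..} h < \<infinity>" by (rule hol)
    show "\<bar>c1\<bar> \<le> CP lam C Mr" by (rule c1b)
    fix r :: real assume "r > 1"
    thus "h r = c1 * sin (sqrt lam * r - \<zeta>) / r + hbar r" by (simp add: hbar_def)
    show "\<bar>hbar r\<bar> \<le> CP lam C Mr * (1 + r) powr - 2" using hbarb[OF \<open>r > 1\<close>] by simp
  qed
qed

theorem lemma5:
  fixes lam \<zeta> C :: real and J N \<rho> :: "real \<Rightarrow> real"
  assumes lam_pos: "lam > 0"
    and J_sol: "solves_radial lam (\<lambda>_. 0) J"
    and N_sol: "solves_radial lam (\<lambda>_. 0) N"
    and J_regular: "\<exists>L. (J \<longlongrightarrow> L) (at_right 0)"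
    and N_singular: "\<not> (\<exists>L. (N \<longlongrightarrow> L) (at_right 0))"
    and J_asym: "(\<lambda>r. J r - cos (sqrt lam * r - \<zeta>) / r) \<in> O[at_top](\<lambda>r. 1 / r ^ 2)"
    and N_asym: "(\<lambda>r. N r - sin (sqrt lam * r - \<zeta>) / r) \<in> O[at_top](\<lambda>r. 1 / r ^ 2)"
    and \<rho>_smooth: "\<forall>n x. (deriv ^^ n) \<rho> differentiable (at x)"
    and \<rho>_one: "\<forall>r>2. \<rho> r = 1"
    and \<rho>_zero: "\<forall>r<1. \<rho> r = 0"
  shows "\<exists>C'. \<forall>\<alpha> k1 k2 k3 \<eta>bar.
      0 < \<alpha> \<and> \<alpha> < 1 \<and>
      holder_norm \<alpha> {0..} (\<lambda>r. \<eta>bar r * (1 + r) ^ 3) + ereal (\<bar>k1\<bar> + \<bar>k2\<bar> + \<bar>k3\<bar>) < ereal C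
      \<longrightarrow>
      (let \<eta> = (\<lambda>r. \<rho> r * inverse (r ^ 2) *
                  (k1 * (sin (sqrt lam * r - \<zeta>))^2 + k2 * (cos (sqrt lam * r - \<zeta>))^2
                   + k3 * sin (sqrt lam * r - \<zeta>) * cos (sqrt lam * r - \<zeta>)) + \<eta>bar r)
       in \<exists>h c1 hbar.
            solves_radial lam \<eta> h \<and>
            holder_norm \<alpha> {0..} h < \<infinity> \<and>
            (\<forall>r>1. h r = c1 * sin (sqrt lam * r - \<zeta>) / r + hbar r) \<and>
            \<bar>c1\<bar> \<le> C' \<and>
            (\<forall>r>1. \<bar>hbar r\<bar> \<le> C' * (1 + r) powr (-2)))"
proof -
  have cz: "cos \<zeta> = 0" by (rule zeta_cos_zero[OF lam_pos J_sol J_regular J_asym])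
  have \<rho>c: "continuous_on UNIV \<rho>"
  proof (intro continuous_at_imp_continuous_on ballI)
    fix x :: real
    have "\<rho> differentiable (at x)" using \<rho>_smooth[rule_format, of 0 x] by simp
    thus "isCont \<rho> x" by (rule differentiable_imp_continuous_within)
  qed
  have cpt: "compact (\<rho> ` {1..2})"
    by (rule compact_continuous_image[OF continuous_on_subset[OF \<rho>c]]) auto
  then obtain a where a: "\<forall>y\<in>\<rho> ` {1..2}. norm y \<le> a"
    using compact_imp_bounded[OF cpt] unfolding bounded_iff by blast
  define Mr where "Mr = max a 0"
  have Mr: "\<forall>r. 1 \<le> r \<and> r \<le> 2 \<longrightarrow> \<bar>\<rho> r\<bar> \<le> Mr" "Mr \<ge> 0"
  proof -
    show "\<forall>r. 1 \<le> r \<and> r \<le> 2 \<longrightarrow> \<bar>\<rho> r\<bar> \<le> Mr"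
    proof (intro allI impI)
      fix r :: real assume "1 \<le> r \<and> r \<le> 2"
      hence "\<rho> r \<in> \<rho> ` {1..2}" by auto
      hence "\<bar>\<rho> r\<bar> \<le> a" using a by auto
      thus "\<bar>\<rho> r\<bar> \<le> Mr" unfolding Mr_def by linarith
    qed
    show "Mr \<ge> 0" unfolding Mr_def by simp
  qed
  show ?thesis
  proof (intro exI[of _ "CP lam C Mr"] allI impI)
    fix \<alpha> k1 k2 k3 :: real and \<eta>bar :: "real \<Rightarrow> real"
    assume H: "0 < \<alpha> \<and> \<alpha> < 1 \<and>
      holder_norm \<alpha> {0..} (\<lambda>r. \<eta>bar r * (1 + r) ^ 3) + ereal (\<bar>k1\<bar> + \<bar>k2\<bar> + \<bar>k3\<bar>) < ereal C"
    have a1: "0 < \<alpha>" "\<alpha> < 1" using H by auto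
    define f where "f = (\<lambda>r. \<eta>bar r * (1 + r) ^ 3)"
    have Hn: "holder_norm \<alpha> {0..} f + ereal (\<bar>k1\<bar> + \<bar>k2\<bar> + \<bar>k3\<bar>) < ereal C"
      using H by (simp add: f_def)
    note ex = holder_extract[OF Hn]
    have ks: "\<bar>k1\<bar> + \<bar>k2\<bar> + \<bar>k3\<bar> \<le> C" using ex(1)[of 0] by simp
    have \<eta>bd: "\<forall>r\<ge>0. \<bar>\<eta>bar r\<bar> \<le> C / (1 + r) ^ 3"
    proof (intro allI impI)
      fix r :: real assume r: "r \<ge> 0"
      have p: "(1 + r) ^ 3 > 0" using r by simp
      have "\<bar>f r\<bar> \<le> C" using ex(1)[OF r] by simp
      hence "\<bar>\<eta>bar r\<bar> * (1 + r) ^ 3 \<le> C" using p by (simp add: f_def abs_mult)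
      thus "\<bar>\<eta>bar r\<bar> \<le> C / (1 + r) ^ 3" using p by (simp add: le_divide_eq)
    qed
    obtain R where R: "\<forall>x\<ge>0. \<forall>y\<ge>0. \<bar>f x - f y\<bar> \<le> R * \<bar>x - y\<bar> powr \<alpha>" using ex(2) by blast
    have cf: "continuous_on {0..} f" by (rule holder_continuous[OF a1(1) R])
    have "continuous_on {0..} (\<lambda>r. f r / (1 + r) ^ 3)"
      by (intro continuous_intros cf) auto
    moreover have "\<And>r. r \<in> {0..} \<Longrightarrow> f r / (1 + r) ^ 3 = \<eta>bar r" by (auto simp: f_def)
    ultimately have \<eta>c: "continuous_on {0..} \<eta>bar" by (rule continuous_on_eq)
    show "let \<eta> = (\<lambda>r. \<rho> r * inverse (r ^ 2) *
                  (k1 * (sin (sqrt lam * r - \<zeta>))^2 + k2 * (cos (sqrt lam * r - \<zeta>))^2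
                   + k3 * sin (sqrt lam * r - \<zeta>) * cos (sqrt lam * r - \<zeta>)) + \<eta>bar r)
       in \<exists>h c1 hbar.
            solves_radial lam \<eta> h \<and>
            holder_norm \<alpha> {0..} h < \<infinity> \<and>
            (\<forall>r>1. h r = c1 * sin (sqrt lam * r - \<zeta>) / r + hbar r) \<and>
            \<bar>c1\<bar> \<le> CP lam C Mr \<and>
            (\<forall>r>1. \<bar>hbar r\<bar> \<le> CP lam C Mr * (1 + r) powr (-2))"
      unfolding Let_def by (rule construct[OF lam_pos cz \<rho>c \<rho>_one \<rho>_zero Mr \<eta>c \<eta>bd ks a1])
  qed
qed


end
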